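(* Let $(a_p)\in\mathcal{T}^+$ and let $\langle\cdot,\cdot\rangle$ be the associated inner product on $\mathcal{S}^*$, $\langle b,c\rangle=\sum_{p\in\mathbb{Z}}b^p\overline{c^p}a_p$. The operator $z$ on $\mathcal{S}^*$ is continuous with respect to the inner product topology if and only if the sequence of ratios $(a_p/a_{p+1})_{p\in\mathbb{Z}}$ is bounded. In this case $\|z\|^2=\sup_p\{a_p/a_{p+1}\}$.
   Context: $\mathcal{S}$ is the space of rapidly decreasing complex $\mathbb{Z}$-indexed sequences and $\mathcal{S}^*$ its dual; $e_p\in\mathcal{S}^*$ has $1$ in place $p$ and $0$ elsewhere, and elements are written $b=(b^p)=\sum b^pe_p$. $z$ denotes the operator on $\mathcal{S}^*$ adjoint to multiplication by $z=e^{2\pi it}$ under the Fourier isomorphism $\mathcal{S}\cong C^\infty(S^1,\mathbb{C})$; explicitly $ze_p=e_{p-1}$. $\mathcal{T}^+$ is the set of strictly positive rapidly decreasing sequences $(a_p)_{p\in\mathbb{Z}}$ with $a_p=a_{-p}$. $\|z\|$ is the operator norm with respect to $\langle\cdot,\cdot\rangle$. *)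

theory Defs
  imports "HOL-Analysis.Analysis"
begin

definition rapid_decr :: "(int \<Rightarrow> 'a::real_normed_vector) \<Rightarrow> bool" where
  "rapid_decr a \<longleftrightarrow> (\<forall>N::nat. \<exists>C. \<forall>p. norm (a p) * (1 + real_of_int \<bar>p\<bar>) ^ N \<le> C)"

definition Tplus :: "(int \<Rightarrow> real) set" where
  "Tplus = {a. rapid_decr a \<and> (\<forall>p. a p > 0) \<and> (\<forall>p. a p = a (-p))}"

text \<open>The dual S*, identified (via the pairing with S) with the sequences of at most
  polynomial growth; b = (b^p) = sum b^p e_p.\<close>
definition Sdual :: "(int \<Rightarrow> complex) set" where
  "Sdual = {b. \<exists>C N::nat. \<forall>p. cmod (b p) \<le> C * (1 + real_of_int \<bar>p\<bar>) ^ N}"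

text \<open>The operator z on S*, determined by z e_p = e_{p-1}: (z b)^q = b^{q+1}.\<close>
definition zop :: "(int \<Rightarrow> complex) \<Rightarrow> (int \<Rightarrow> complex)" where
  "zop b = (\<lambda>q. b (q + 1))"

definition ip :: "(int \<Rightarrow> real) \<Rightarrow> (int \<Rightarrow> complex) \<Rightarrow> (int \<Rightarrow> complex) \<Rightarrow> complex" where
  "ip a b c = (\<Sum>\<^sub>\<infinity>p. b p * cnj (c p) * complex_of_real (a p))"

definition ipnorm :: "(int \<Rightarrow> real) \<Rightarrow> (int \<Rightarrow> complex) \<Rightarrow> real" where
  "ipnorm a b = sqrt (Re (ip a b b))"

definition z_continuous :: "(int \<Rightarrow> real) \<Rightarrow> bool" where
  "z_continuous a \<longleftrightarrow> (\<forall>b\<in>Sdual. \<forall>e>0. \<exists>d>0. \<forall>c\<in>Sdual.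
      ipnorm a (\<lambda>p. c p - b p) < d \<longrightarrow> ipnorm a (\<lambda>p. zop c p - zop b p) < e)"

definition z_opnorm :: "(int \<Rightarrow> real) \<Rightarrow> real" where
  "z_opnorm a = Sup {ipnorm a (zop b) | b. b \<in> Sdual \<and> ipnorm a b \<le> 1}"

end

theory Submission imports Defs begin

definition Qf :: "(int \<Rightarrow> real) \<Rightarrow> (int \<Rightarrow> complex) \<Rightarrow> real" where
  "Qf a b = infsum (\<lambda>p. (cmod (b p))\<^sup>2 * a p) UNIV"

lemma summ_inv_sq: "(\<lambda>p::int. 1 / (1 + real_of_int \<bar>p\<bar>)^2) summable_on UNIV"
proof -
  let ?f = "\<lambda>p::int. 1 / (1 + real_of_int \<bar>p\<bar>)^2"
  let ?g = "\<lambda>n::nat. 1 / (1 + real n)^2"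
  have "summable (\<lambda>n. inverse (real n ^ 2))"
    by (rule inverse_power_summable) auto
  then have "summable (\<lambda>n. inverse (real (Suc n) ^ 2))"
    by (subst summable_Suc_iff)
  then have s: "summable ?g"
    by (simp add: field_simps)
  have g: "?g summable_on UNIV"
    by (rule norm_summable_imp_summable_on) (use s in simp)
  have "?f summable_on (int ` UNIV)"
    by (subst summable_on_reindex) (use g in \<open>auto simp: o_def\<close>)
  moreover have "?f summable_on ((\<lambda>n. - int n) ` UNIV)"
    by (subst summable_on_reindex) (use g in \<open>auto simp: o_def inj_on_def\<close>)
  ultimately have "?f summable_on (int ` UNIV \<union> (\<lambda>n. - int n) ` UNIV)"
    by (rule summable_on_union)
  moreover have "int ` UNIV \<union> (\<lambda>n. - int n) ` UNIV = UNIV"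
  proof -
    have "x \<in> int ` UNIV \<union> (\<lambda>n. - int n) ` UNIV" for x
    proof (cases "x \<ge> 0")
      case True then show ?thesis by (metis UnI1 nonneg_int_cases rangeI)
    next
      case False then have "x = - int (nat (-x))" by simp
      then show ?thesis by blast
    qed
    then show ?thesis by blast
  qed
  ultimately show ?thesis by simp
qed

lemma Sdual_nonneg_C:
  assumes "\<forall>p. cmod (b p) \<le> C * (1 + real_of_int \<bar>p\<bar>) ^ N" shows "C \<ge> 0"
  using assms[rule_format, of 0] by simp (meson norm_ge_zero order_trans)

lemma summ_Q:
  assumes a: "a \<in> Tplus" and b: "b \<in> Sdual"
  shows "(\<lambda>p. (cmod (b p))\<^sup>2 * a p) summable_on UNIV"
proof -
  obtain C N where CN: "\<forall>p. cmod (b p) \<le> C * (1 + real_of_int \<bar>p\<bar>) ^ N"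
    using b by (auto simp: Sdual_def)
  have C0: "C \<ge> 0" using Sdual_nonneg_C[OF CN] .
  obtain D where D: "\<forall>p. norm (a p) * (1 + real_of_int \<bar>p\<bar>) ^ (2*N+2) \<le> D"
    using a unfolding Tplus_def rapid_decr_def by blast
  have apos: "\<And>p. a p > 0" using a by (auto simp: Tplus_def)
  have "(\<lambda>p::int. (C^2 * D) * (1 / (1 + real_of_int \<bar>p\<bar>)^2)) summable_on UNIV"
    by (rule summable_on_cmult_right[OF summ_inv_sq])
  then show ?thesis
  proof (rule summable_on_comparison_test)
    fix p :: int
    show "0 \<le> (cmod (b p))\<^sup>2 * a p" using apos[of p] by simp
    define x where "x = 1 + real_of_int \<bar>p\<bar>"
    have x1: "x \<ge> 1" by (simp add: x_def)
    have "(cmod (b p))\<^sup>2 \<le> (C * x ^ N)^2"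
      using CN[rule_format, of p] by (intro power_mono) (auto simp: x_def)
    then have "(cmod (b p))\<^sup>2 * a p \<le> (C * x ^ N)^2 * a p"
      using apos[of p] by (intro mult_right_mono) auto
    also have "\<dots> = C^2 * (a p * x^(2*N+2)) / x^2"
      using x1 by (simp add: field_simps power_mult_distrib power_add power_mult power2_eq_square)
    also have "\<dots> \<le> C^2 * D / x^2"
      using D[rule_format, of p] apos[of p] x1 C0
      by (intro divide_right_mono mult_left_mono) (auto simp: x_def)
    finally show "(cmod (b p))\<^sup>2 * a p \<le> (C^2 * D) * (1 / (1 + real_of_int \<bar>p\<bar>)^2)"
      by (simp add: x_def)
  qed
qed

lemma ipnorm_Q:
  assumes a: "a \<in> Tplus" and b: "b \<in> Sdual"
  shows "ipnorm a b = sqrt (Qf a b)"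
proof -
  have e: "(\<lambda>p. b p * cnj (b p) * complex_of_real (a p)) = (\<lambda>p. complex_of_real ((cmod (b p))\<^sup>2 * a p))"
    by (auto simp: complex_mult_cnj cmod_power2 simp del: of_real_power)
  have "((\<lambda>p. (cmod (b p))\<^sup>2 * a p) has_sum Qf a b) UNIV"
    unfolding Qf_def using summ_Q[OF a b] by (simp add: summable_iff_has_sum_infsum)
  then have "((\<lambda>p. complex_of_real ((cmod (b p))\<^sup>2 * a p)) has_sum complex_of_real (Qf a b)) UNIV"
    by (rule has_sum_of_real)
  then have "ip a b b = complex_of_real (Qf a b)"
    unfolding ip_def e by (rule infsumI)
  then show ?thesis by (simp add: ipnorm_def)
qed

lemma Q_nonneg: assumes "a \<in> Tplus" shows "Qf a b \<ge> 0"
  using assms unfolding Qf_def Tplus_def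
  by (intro infsum_nonneg) (simp add: less_imp_le)


lemma Sdual_diff:
  assumes "b \<in> Sdual" "c \<in> Sdual" shows "(\<lambda>p. c p - b p) \<in> Sdual"
proof -
  obtain C1 N1 where 1: "\<forall>p. cmod (b p) \<le> C1 * (1 + real_of_int \<bar>p\<bar>) ^ N1"
    using assms by (auto simp: Sdual_def)
  obtain C2 N2 where 2: "\<forall>p. cmod (c p) \<le> C2 * (1 + real_of_int \<bar>p\<bar>) ^ N2"
    using assms by (auto simp: Sdual_def)
  have C1: "C1 \<ge> 0" using Sdual_nonneg_C[OF 1] .
  have C2: "C2 \<ge> 0" using Sdual_nonneg_C[OF 2] .
  have "cmod (c p - b p) \<le> (C1 + C2) * (1 + real_of_int \<bar>p\<bar>) ^ (N1 + N2)" for p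
  proof -
    define x where "x = 1 + real_of_int \<bar>p\<bar>"
    have x: "x \<ge> 1" by (simp add: x_def)
    have "cmod (c p - b p) \<le> cmod (c p) + cmod (b p)" by (rule norm_triangle_ineq4)
    also have "\<dots> \<le> C2 * x ^ N2 + C1 * x ^ N1" using 1 2 by (auto simp: x_def intro: add_mono)
    also have "\<dots> \<le> C2 * x ^ (N1+N2) + C1 * x ^ (N1+N2)"
      using x C1 C2 by (intro add_mono mult_left_mono power_increasing) auto
    finally show ?thesis by (simp add: x_def algebra_simps)
  qed
  then show ?thesis unfolding Sdual_def by blast
qed

lemma Sdual_zop:
  assumes "b \<in> Sdual" shows "zop b \<in> Sdual"
proof -
  obtain C N where 1: "\<forall>p. cmod (b p) \<le> C * (1 + real_of_int \<bar>p\<bar>) ^ N"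
    using assms by (auto simp: Sdual_def)
  have C: "C \<ge> 0" using Sdual_nonneg_C[OF 1] .
  have "cmod (zop b p) \<le> (C * 2^N) * (1 + real_of_int \<bar>p\<bar>) ^ N" for p
  proof -
    have "cmod (zop b p) \<le> C * (1 + real_of_int \<bar>p+1\<bar>) ^ N" using 1[rule_format, of "p+1"] by (simp add: zop_def)
    also have "\<dots> \<le> C * (2 * (1 + real_of_int \<bar>p\<bar>)) ^ N"
      using C by (intro mult_left_mono power_mono) auto
    also have "\<dots> = (C * 2^N) * (1 + real_of_int \<bar>p\<bar>) ^ N"
      by (subst power_mult_distrib) (rule mult.assoc[symmetric])
    finally show ?thesis .
  qed
  then show ?thesis unfolding Sdual_def by blast
qed

lemma Sdual_single: "(\<lambda>q. if q = p then c else 0) \<in> Sdual"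
  unfolding Sdual_def by (intro CollectI exI[of _ "cmod c"] exI[of _ 0]) auto

lemma Sdual_zero: "(\<lambda>q. 0) \<in> Sdual"
  unfolding Sdual_def by (intro CollectI exI[of _ "0"] exI[of _ 0]) auto

lemma Q_single: "Qf a (\<lambda>q. if q = p then c else 0) = (cmod c)^2 * a p"
proof -
  have "Qf a (\<lambda>q. if q = p then c else 0) = infsum (\<lambda>q. (cmod (if q = p then c else 0))\<^sup>2 * a q) {p}"
    unfolding Qf_def by (rule infsum_cong_neutral) auto
  then show ?thesis by simp
qed

lemma zop_single: "zop (\<lambda>q. if q = p + 1 then c else 0) = (\<lambda>q. if q = p then c else 0)"
  by (auto simp: zop_def)

lemma Q_zop:
  assumes a: "a \<in> Tplus" and b: "b \<in> Sdual" and M: "\<And>p. a p / a (p + 1) \<le> M"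
  shows "Qf a (zop b) \<le> M * Qf a b"
proof -
  have apos: "\<And>p. a p > 0" using a by (auto simp: Tplus_def)
  have inj: "inj_on (\<lambda>q::int. q + 1) UNIV" by (auto simp: inj_on_def)
  have img: "(\<lambda>q::int. q + 1) ` UNIV = UNIV"
  proof -
    have "x \<in> (\<lambda>q::int. q + 1) ` UNIV" for x :: int
      by (rule image_eqI[of _ _ "x - 1"]) simp_all
    then show ?thesis by blast
  qed
  let ?h = "\<lambda>p. (cmod (b p))\<^sup>2 * a p"
  have s1: "(\<lambda>q. (cmod (zop b q))\<^sup>2 * a q) summable_on UNIV"
    by (rule summ_Q[OF a Sdual_zop[OF b]])
  have "?h summable_on ((\<lambda>q::int. q + 1) ` UNIV)" unfolding img by (rule summ_Q[OF a b])
  then have s2: "(?h \<circ> (\<lambda>q. q + 1)) summable_on UNIV"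
    using summable_on_reindex[OF inj] by blast
  have "Qf a (zop b) = infsum (\<lambda>q. (cmod (zop b q))\<^sup>2 * a q) UNIV" by (simp add: Qf_def)
  also have "\<dots> \<le> infsum (\<lambda>q. M * (?h \<circ> (\<lambda>q. q + 1)) q) UNIV"
  proof (rule infsum_mono[OF s1])
    show "(\<lambda>q. M * (?h \<circ> (\<lambda>q. q + 1)) q) summable_on UNIV"
      by (rule summable_on_cmult_right[OF s2])
    fix q :: int
    have "a q \<le> M * a (q + 1)" using M[of q] apos[of "q+1"] by (simp add: divide_le_eq)
    then show "(cmod (zop b q))\<^sup>2 * a q \<le> M * (?h \<circ> (\<lambda>q. q + 1)) q"
    proof -
      have "(cmod (b (q+1)))^2 * a q \<le> (cmod (b (q+1)))^2 * (M * a (q+1))"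
        by (rule mult_left_mono) (use \<open>a q \<le> M * a (q + 1)\<close> in simp_all)
      then show ?thesis by (simp add: zop_def mult_ac)
    qed
  qed
  also have "\<dots> = M * infsum (?h \<circ> (\<lambda>q. q + 1)) UNIV"
    by (rule infsum_cmult_right[OF s2])
  also have "infsum (?h \<circ> (\<lambda>q. q + 1)) UNIV = Qf a b"
    unfolding Qf_def using infsum_reindex[OF inj, of ?h] unfolding img by simp
  finally show ?thesis .
qed


lemma ipnorm_zop_le:
  assumes a: "a \<in> Tplus" and b: "b \<in> Sdual" and M: "\<And>p. a p / a (p + 1) \<le> M" and M0: "M \<ge> 0"
  shows "ipnorm a (zop b) \<le> sqrt M * ipnorm a b"
proof -
  have "ipnorm a (zop b) = sqrt (Qf a (zop b))" by (rule ipnorm_Q[OF a Sdual_zop[OF b]])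
  also have "\<dots> \<le> sqrt (M * Qf a b)" using Q_zop[OF a b M] by simp
  also have "\<dots> = sqrt M * ipnorm a b" by (simp add: ipnorm_Q[OF a b] real_sqrt_mult)
  finally show ?thesis .
qed

lemma ipnorm_single:
  assumes a: "a \<in> Tplus" and t: "t \<ge> 0"
  shows "ipnorm a (\<lambda>q. if q = p + 1 then complex_of_real t else 0) = t * sqrt (a (p + 1))"
    and "ipnorm a (zop (\<lambda>q. if q = p + 1 then complex_of_real t else 0)) = t * sqrt (a p)"
proof -
  have apos: "\<And>p. a p > 0" using a by (auto simp: Tplus_def)
  show "ipnorm a (\<lambda>q. if q = p + 1 then complex_of_real t else 0) = t * sqrt (a (p + 1))"
    using t apos by (simp add: ipnorm_Q[OF a Sdual_single] Q_single real_sqrt_mult)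
  show "ipnorm a (zop (\<lambda>q. if q = p + 1 then complex_of_real t else 0)) = t * sqrt (a p)"
    unfolding zop_single
    using t apos by (simp add: ipnorm_Q[OF a Sdual_single] Q_single real_sqrt_mult)
qed

theorem mainTheorem17:
  fixes a :: "int \<Rightarrow> real"
  assumes "a \<in> Tplus"
  shows "(z_continuous a \<longleftrightarrow> bounded (range (\<lambda>p. a p / a (p + 1)))) \<and>
         (bounded (range (\<lambda>p. a p / a (p + 1))) \<longrightarrow>
           (z_opnorm a)\<^sup>2 = (SUP p. a p / a (p + 1)))"
proof -
  have a: "a \<in> Tplus" by (rule assms)
  have apos: "\<And>p. a p > 0" using a by (auto simp: Tplus_def)
  define r where "r = (\<lambda>p. a p / a (p + 1))"
  have rpos: "\<And>p. r p > 0" using apos by (simp add: r_def)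
  have sqr: "\<And>p. sqrt (a p) / sqrt (a (p + 1)) = sqrt (r p)"
    by (simp add: r_def real_sqrt_divide)
  have zop0: "zop (\<lambda>q. 0) = (\<lambda>q. 0)" by (simp add: zop_def)
  have part1: "bounded (range r)" if zc: "z_continuous a"
  proof -
    obtain d where d: "d > 0" and dd: "\<And>c. c \<in> Sdual \<Longrightarrow> ipnorm a (\<lambda>p. c p - 0) < d \<Longrightarrow>
        ipnorm a (\<lambda>p. zop c p - zop (\<lambda>q. 0) p) < 1"
      using zc[unfolded z_continuous_def, rule_format, OF Sdual_zero, of 1] by auto
    have "r p \<le> (2 / d)^2" for p
    proof -
      define t where "t = d / (2 * sqrt (a (p + 1)))"
      have t0: "t \<ge> 0" using d apos[of "p+1"] by (simp add: t_def)
      let ?w = "\<lambda>q. if q = p + 1 then complex_of_real t else 0"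
      have "ipnorm a ?w = d / 2"
        using ipnorm_single(1)[OF a t0, of p] apos[of "p+1"] by (simp add: t_def)
      then have "ipnorm a (\<lambda>q. ?w q - 0) < d" using d by simp
      then have "ipnorm a (\<lambda>q. zop ?w q - zop (\<lambda>q. 0) q) < 1"
        by (rule dd[OF Sdual_single])
      then have "ipnorm a (zop ?w) < 1" by (simp add: zop0)
      then have "t * sqrt (a p) < 1" using ipnorm_single(2)[OF a t0, of p] by simp
      moreover have "t * sqrt (a p) = d / 2 * sqrt (r p)"
      proof -
        have "t * sqrt (a p) = d / 2 * (sqrt (a p) / sqrt (a (p + 1)))" by (simp add: t_def)
        then show ?thesis by (simp only: sqr)
      qed
      ultimately have "sqrt (r p) < 2 / d" using d by (simp add: field_simps)
      then have "(sqrt (r p))^2 \<le> (2 / d)^2"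
        using rpos[of p] by (intro power_mono) auto
      then show ?thesis using rpos[of p] by simp
    qed
    then show ?thesis unfolding bounded_iff using rpos
      by (intro exI[of _ "(2/d)^2"]) (auto simp: less_imp_le)
  qed
  have bnd: "\<exists>M. M \<ge> 0 \<and> (\<forall>p. r p \<le> M)" if br: "bounded (range r)"
  proof -
    obtain B where B: "\<And>x. x \<in> range r \<Longrightarrow> norm x \<le> B" using br unfolding bounded_iff by blast
    have "\<forall>p. r p \<le> B" using B by (metis abs_ge_self order_trans rangeI real_norm_def)
    moreover have "B \<ge> 0" using B[of "r 0"] by (metis norm_ge_zero order_trans rangeI)
    ultimately show ?thesis by blast
  qed
  have part2: "z_continuous a" if b: "bounded (range r)"
  proof -
    obtain M where M0: "M \<ge> 0" and M: "\<And>p. r p \<le> M" using bnd[OF b] by blast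
    show ?thesis unfolding z_continuous_def
    proof (intro ballI allI impI)
      fix b e assume bS: "b \<in> Sdual" and e: "(e::real) > 0"
      show "\<exists>d>0. \<forall>c\<in>Sdual. ipnorm a (\<lambda>p. c p - b p) < d \<longrightarrow> ipnorm a (\<lambda>p. zop c p - zop b p) < e"
      proof (intro exI[of _ "e / (sqrt M + 1)"] conjI ballI impI)
        show "e / (sqrt M + 1) > 0" using e M0 by (intro divide_pos_pos add_nonneg_pos real_sqrt_ge_zero) auto
        fix c assume cS: "c \<in> Sdual" and lt: "ipnorm a (\<lambda>p. c p - b p) < e / (sqrt M + 1)"
        have eq: "(\<lambda>p. zop c p - zop b p) = zop (\<lambda>p. c p - b p)" by (simp add: zop_def)
        have "ipnorm a (zop (\<lambda>p. c p - b p)) \<le> sqrt M * ipnorm a (\<lambda>p. c p - b p)"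
          by (rule ipnorm_zop_le[OF a Sdual_diff[OF bS cS] _ M0]) (use M in \<open>simp add: r_def\<close>)
        also have "\<dots> \<le> sqrt M * (e / (sqrt M + 1))"
          using lt M0 by (intro mult_left_mono) auto
        also have "\<dots> < e"
        proof -
          have sM: "sqrt M \<ge> 0" using M0 by simp
          then have "sqrt M * (e / (sqrt M + 1)) = e * (sqrt M / (sqrt M + 1))" by simp
          also have "\<dots> < e * 1"
            using sM e by (intro mult_strict_left_mono) (auto simp: divide_less_eq add_nonneg_pos)
          finally show ?thesis by simp
        qed
        finally show "ipnorm a (\<lambda>p. zop c p - zop b p) < e" by (simp add: eq)
      qed
    qed
  qed
  have part3: "(z_opnorm a)\<^sup>2 = (SUP p. r p)" if b: "bounded (range r)"
  proof -
    define M where "M = (SUP p. r p)"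
    have bdd: "bdd_above (range r)" using b by (rule bounded_imp_bdd_above)
    have rM: "\<And>p. r p \<le> M" unfolding M_def using bdd by (intro cSUP_upper) auto
    have M0: "M \<ge> 0" using rM[of 0] rpos[of 0] by simp
    define S where "S = {ipnorm a (zop b) | b. b \<in> Sdual \<and> ipnorm a b \<le> 1}"
    have zS: "z_opnorm a = Sup S" by (simp add: z_opnorm_def S_def)
    have Sle: "x \<le> sqrt M" if xS: "x \<in> S" for x
    proof -
      obtain b where bS: "b \<in> Sdual" and b1: "ipnorm a b \<le> 1" and x: "x = ipnorm a (zop b)"
        using xS by (auto simp: S_def)
      have "x \<le> sqrt M * ipnorm a b"
        unfolding x by (rule ipnorm_zop_le[OF a bS _ M0]) (use rM in \<open>simp add: r_def\<close>)
      also have "\<dots> \<le> sqrt M * 1" using b1 M0 by (intro mult_left_mono) auto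
      finally show ?thesis by simp
    qed
    have Sbdd: "bdd_above S" using Sle by (auto simp: bdd_above_def)
    have memS: "sqrt (r p) \<in> S" for p
    proof -
      define t where "t = 1 / sqrt (a (p + 1))"
      have t0: "t \<ge> 0" using apos[of "p+1"] by (simp add: t_def)
      let ?w = "\<lambda>q. if q = p + 1 then complex_of_real t else 0"
      have "ipnorm a ?w = 1"
        using ipnorm_single(1)[OF a t0, of p] apos[of "p+1"] by (simp add: t_def)
      moreover have "ipnorm a (zop ?w) = sqrt (r p)"
        using ipnorm_single(2)[OF a t0, of p] sqr[of p] by (simp add: t_def)
      ultimately show ?thesis unfolding S_def using Sdual_single[of "p+1" "complex_of_real t"]
        by force
    qed
    have Sne: "S \<noteq> {}" using memS[of 0] by blast
    have up: "z_opnorm a \<le> sqrt M" unfolding zS using Sne Sle by (intro cSup_least) auto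
    have low: "sqrt (r p) \<le> z_opnorm a" for p unfolding zS using memS Sbdd by (intro cSup_upper) auto
    have z0: "z_opnorm a \<ge> 0" using low[of 0] by (meson order_trans real_sqrt_ge_zero rpos less_imp_le)
    have "r p \<le> (z_opnorm a)^2" for p
    proof -
      have "(sqrt (r p))^2 \<le> (z_opnorm a)^2" using low[of p] rpos[of p] by (intro power_mono) auto
      then show ?thesis using rpos[of p] by simp
    qed
    then have "M \<le> (z_opnorm a)^2" unfolding M_def by (intro cSUP_least) auto
    moreover have "(z_opnorm a)^2 \<le> (sqrt M)^2" using up z0 by (intro power_mono) auto
    ultimately show ?thesis using M0 unfolding M_def by simp
  qed
  show ?thesis
    using part1 part2 part3 unfolding r_def by blast
qed

end
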